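(* For each $k\in\{1,\dots,n-1\}$, the set $\phi(\mathcal{S}_k)$ is a basis of the $\mathbb{C}(q)$-vector space $H_k$. In particular, for $k=1$, $\{e_1,\dots,e_{n-1}\}$ is a basis of $H_1$.
   Context: Let $U=U_q(\mathfrak{gl}(1|1))$ be the unital superalgebra over $\mathbb{C}(q)$ generated by odd elements $E,F$ and even elements $\mathbf q^h$ ($h\in P^*=\mathbb{Z}h_1\oplus\mathbb{Z}h_2$) with relations $\mathbf q^0=1$, $\mathbf q^h\mathbf q^{h'}=\mathbf q^{h+h'}$, $\mathbf q^hE=q^{\langle h,\alpha\rangle}E\mathbf q^h$, $\mathbf q^hF=q^{-\langle h,\alpha\rangle}F\mathbf q^h$, $EF+FE=\frac{K-K^{-1}}{q-q^{-1}}$ with $K=\mathbf q^{h_1+h_2}$, $E^2=F^2=0$; here $P=\mathbb{Z}\epsilon_1\oplus\mathbb{Z}\epsilon_2$ with $\{\epsilon_1,\epsilon_2\}$ dual to $\{h_1,h_2\}$ and $\alpha=\epsilon_1-\epsilon_2$. Comultiplication: $\Delta(E)=E\otimes K^{-1}+1\otimes E$, $\Delta(F)=F\otimes1+K\otimes F$, $\Delta(\mathbf q^h)=\mathbf q^h\otimes\mathbf q^h$; on tensor products one uses the Koszul sign rule $(X\otimes Y)(a\otimes b)=(-1)^{|Y||a|}Xa\otimes Yb$. $V$ has basis $v_0$ (even), $v_1$ (odd) with $Ev_0=0,Ev_1=v_0,Fv_0=v_1,Fv_1=0$, $\mathbf q^hv_0=q^{\langle h,\epsilon_1\rangle}v_0$,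 $\mathbf q^hv_1=q^{\langle h,\epsilon_2\rangle}v_1$. Fix $n\ge2$; $U$ acts on $V^{\otimes m}$ via iterated comultiplication. For $0\le k\le n-1$, $H_k=\{v\in V^{\otimes n}: Ev=0,\ \mathbf q^hv=q^{\langle h,(n-k)\epsilon_1+k\epsilon_2\rangle}v\ \forall h\in P^*\}$. For $1\le i\le n-1$, $e_i=v_0^{\otimes(i-1)}\otimes(q^{-1}v_0\otimes v_1-v_1\otimes v_0)\otimes v_0^{\otimes(n-1-i)}$. $\mathcal{S}_k$ is the set of strings $s=(a_1,b_1,a_2,b_2,\dots,b_l,a_{l+1})$ ($l\ge0$) of nonnegative integers with all $b_i\ge2$, $\sum_{i=1}^l(b_i-1)=k$ and $\sum_{i=1}^{l+1}a_i+\sum_{i=1}^lb_i=n$; and $\phi(s)=v_0^{\otimes a_1}\otimes E(v_1^{\otimes b_1})\otimes v_0^{\otimes a_2}\otimes\cdots\otimes E(v_1^{\otimes b_l})\otimes v_0^{\otimes a_{l+1}}\in V^{\otimes n}$, where $E(v_1^{\otimes b})$ is computed in $V^{\otimes b}$ and factors $v_0^{\otimes 0}$ are omitted. *)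

theory Defs
  imports Complex_Main "HOL-Computational_Algebra.Polynomial"
    "HOL-Computational_Algebra.Fraction_Field" "HOL-Library.Function_Algebras"
begin

type_synonym fld = "complex poly fract"

definition qq :: fld where "qq = Fract [:0, 1:] 1"

(* Vectors of V^{\<otimes>m}: coefficient functions on basis words.
   A word is a bool list; False = v_0 (even), True = v_1 (odd).
   The basis word [x_1,...,x_m] stands for v_{x_1} \<otimes> ... \<otimes> v_{x_m}. *)
type_synonym vec = "bool list \<Rightarrow> fld"

definition scaleV :: "fld \<Rightarrow> vec \<Rightarrow> vec" where
  "scaleV c f = (\<lambda>w. c * f w)"

global_interpretation tv: vector_space scaleV
  by unfold_locales (auto simp: scaleV_def algebra_simps plus_fun_def)

definition Vt :: "nat \<Rightarrow> vec set" where
  "Vt m = {f. \<forall>w. length w \<noteq> m \<longrightarrow> f w = 0}"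

definition bvec :: "bool list \<Rightarrow> vec" where
  "bvec u = (\<lambda>w. if w = u then 1 else 0)"

(* tensor product of f \<in> V^{\<otimes>a} with g \<in> V^{\<otimes>b}, identified with V^{\<otimes>(a+b)} *)
definition tens :: "nat \<Rightarrow> vec \<Rightarrow> vec \<Rightarrow> vec" where
  "tens a f g = (\<lambda>w. if a \<le> length w then f (take a w) * g (drop a w) else 0)"

(* Action of E on V^{\<otimes>m} via iterated comultiplication, V^{\<otimes>(m+1)} = V \<otimes> V^{\<otimes>m}:
   \<Delta>(E) = E \<otimes> K^{-1} + 1 \<otimes> E, with Koszul signs; K acts on V^{\<otimes>m} by q^m
   (since K v_0 = q v_0, K v_1 = q v_1).  Writing f = v_0 \<otimes> f0 + v_1 \<otimes> f1:
   E f = v_0 \<otimes> (E f0 + q^{-m} f1) - v_1 \<otimes> E f1. *)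
fun Eop :: "nat \<Rightarrow> vec \<Rightarrow> vec" where
  "Eop 0 f = (\<lambda>w. 0)"
| "Eop (Suc m) f = (\<lambda>w. case w of
      [] \<Rightarrow> 0
    | x # r \<Rightarrow> (if x then - Eop m (\<lambda>u. f (True # u)) r
               else Eop m (\<lambda>u. f (False # u)) r + qq powi (- int m) * f (True # r)))"

(* Action of q^h, h = c1 h_1 + c2 h_2 (encoded as (c1,c2)), on V^{\<otimes>m} via
   \<Delta>(q^h) = q^h \<otimes> q^h;  q^h v_0 = q^{c1} v_0,  q^h v_1 = q^{c2} v_1. *)
fun Qh :: "int \<times> int \<Rightarrow> nat \<Rightarrow> vec \<Rightarrow> vec" where
  "Qh h 0 f = f"
| "Qh h (Suc m) f = (\<lambda>w. case w of
      [] \<Rightarrow> 0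
    | x # r \<Rightarrow> qq powi (if x then snd h else fst h) * Qh h m (\<lambda>u. f (x # u)) r)"

(* H_k: highest weight vectors of weight (n-k) \<epsilon>_1 + k \<epsilon>_2 in V^{\<otimes>n} *)
definition Hk :: "nat \<Rightarrow> nat \<Rightarrow> vec set" where
  "Hk n k = {v \<in> Vt n. Eop n v = (\<lambda>w. 0) \<and>
     (\<forall>c1 c2. Qh (c1, c2) n v = scaleV (qq powi (c1 * int (n - k) + c2 * int k)) v)}"

(* e_i = v_0^{\<otimes>(i-1)} \<otimes> (q^{-1} v_0 \<otimes> v_1 - v_1 \<otimes> v_0) \<otimes> v_0^{\<otimes>(n-1-i)} *)
definition ei :: "nat \<Rightarrow> nat \<Rightarrow> vec" where
  "ei n i = tens (i + 1)
     (tens (i - 1) (bvec (replicate (i - 1) False))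
        (scaleV (inverse qq) (bvec [False, True]) - bvec [True, False]))
     (bvec (replicate (n - 1 - i) False))"

(* Strings s = (a_1,b_1,a_2,...,b_l,a_{l+1}) encoded as nat lists of odd length:
   even positions hold the a's, odd positions hold the b's. *)
definition Strings :: "nat \<Rightarrow> nat \<Rightarrow> nat list set" where
  "Strings n k = {s. odd (length s) \<and> (\<forall>i < length s. odd i \<longrightarrow> 2 \<le> s ! i)
      \<and> (\<Sum>i \<in> {i. i < length s \<and> odd i}. s ! i - 1) = k
      \<and> sum_list s = n}"

(* \<phi>(s) = v_0^{a_1} \<otimes> E(v_1^{\<otimes>b_1}) \<otimes> v_0^{a_2} \<otimes> ... \<otimes> v_0^{a_{l+1}} *)
fun phi :: "nat list \<Rightarrow> vec" where
  "phi [] = (\<lambda>w. 0)"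
| "phi [a] = bvec (replicate a False)"
| "phi (a # b # rest) =
     tens (a + b) (tens a (bvec (replicate a False)) (Eop b (bvec (replicate b True))))
       (phi rest)"

end

theory Submission
  imports Defs "HOL-Library.List_Lexorder"
begin

lemma sum_fun_apply: "(sum f A) x = (\<Sum>a\<in>A. f a x)"
  by (induction A rule: infinite_finite_induct) auto

lemma qq_nz: "qq \<noteq> 0"
  by (simp add: qq_def eq_fract Zero_fract_def)

lemma Eop_lin: "Eop m (\<lambda>w. a * f w + b * g w) = (\<lambda>w. a * Eop m f w + b * Eop m g w)"
proof (induction m arbitrary: f g)
  case 0 then show ?case by simp
next
  case (Suc m)
  show ?case
  proof
    fix w show "Eop (Suc m) (\<lambda>w. a * f w + b * g w) w = a * Eop (Suc m) f w + b * Eop (Suc m) g w"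
      using Suc[of "\<lambda>u. f (True # u)" "\<lambda>u. g (True # u)"]
            Suc[of "\<lambda>u. f (False # u)" "\<lambda>u. g (False # u)"]
      by (cases w) (auto simp: algebra_simps fun_eq_iff)
  qed
qed

lemma Eop_add: "Eop m (\<lambda>w. f w + g w) = (\<lambda>w. Eop m f w + Eop m g w)"
  using Eop_lin[of m 1 f 1 g] by simp
lemma Eop_scale: "Eop m (\<lambda>w. a * f w) = (\<lambda>w. a * Eop m f w)"
  using Eop_lin[of m a f 0 f] by simp
lemma Eop_zero: "Eop m (\<lambda>w. 0) = (\<lambda>w. 0)"
  using Eop_scale[of m 0 "\<lambda>w. 0"] by simp
lemma Eop_neg: "Eop m (\<lambda>w. - f w) = (\<lambda>w. - Eop m f w)"
  using Eop_scale[of m "-1" f] by simp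

lemma Eop_Eop: "Eop m (Eop m f) = (\<lambda>w. 0)"
proof (induction m arbitrary: f)
  case 0 then show ?case by simp
next
  case (Suc m)
  show ?case
  proof
    fix w show "Eop (Suc m) (Eop (Suc m) f) w = 0"
    proof (cases w)
      case Nil then show ?thesis by simp
    next
      case (Cons x r)
      have e1: "(\<lambda>u. Eop (Suc m) f (True # u)) = (\<lambda>u. - Eop m (\<lambda>u. f (True # u)) u)"
        by simp
      have e2: "(\<lambda>u. Eop (Suc m) f (False # u)) = (\<lambda>u. Eop m (\<lambda>u. f (False # u)) u + qq powi (- int m) * f (True # u))"
        by simp
      show ?thesis using Cons Suc[of "\<lambda>u. f (True # u)"] Suc[of "\<lambda>u. f (False # u)"]
        apply (simp only: Eop.simps list.case e1 e2)
        apply (simp add: Eop_add Eop_scale Eop_neg fun_eq_iff)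
        done
    qed
  qed
qed

definition hom :: "nat \<Rightarrow> nat \<Rightarrow> vec \<Rightarrow> bool" where
  "hom m j f \<longleftrightarrow> (\<forall>w. f w \<noteq> 0 \<longrightarrow> length w = m \<and> count_list w True = j)"

lemma hom_bvec: "hom (length u) (count_list u True) (bvec u)"
  by (simp add: hom_def bvec_def)

lemma count_take_drop: "count_list w x = count_list (take a w) x + count_list (drop a w) x"
  by (metis append_take_drop_id count_list_append)

lemma hom_tens: "hom a j f \<Longrightarrow> hom b i g \<Longrightarrow> hom (a + b) (j + i) (tens a f g)"
  unfolding hom_def tens_def
  apply (intro allI impI)
  subgoal for w
    apply (cases "a \<le> length w"; simp)
    apply (drule spec[of _ "take a w"], drule spec[of _ "drop a w"])
    using count_take_drop[of w True a] by auto
  done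

lemma Eop_supp: "hom m j f \<Longrightarrow> Eop m f w \<noteq> 0 \<Longrightarrow> length w = m \<and> Suc (count_list w True) = j"
proof (induction m arbitrary: f j w)
  case 0 then show ?case by simp
next
  case (Suc m)
  show ?case
  proof (cases w)
    case Nil then show ?thesis using Suc by simp
  next
    case (Cons x r)
    show ?thesis
    proof (cases x)
      case True
      have h: "hom m (j - 1) (\<lambda>u. f (True # u))" unfolding hom_def
      proof (intro allI impI)
        fix u assume "f (True # u) \<noteq> 0"
        then have "length (True # u) = Suc m \<and> count_list (True # u) True = j"
          using Suc.prems(1) unfolding hom_def by blast
        then show "length u = m \<and> count_list u True = j - 1" by auto
      qed
      have "Eop m (\<lambda>u. f (True # u)) r \<noteq> 0" using Suc.prems(2) Cons True by simp
      from Suc.IH[OF h this] show ?thesis using Cons True by auto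
    next
      case False
      have h: "hom m j (\<lambda>u. f (False # u))" unfolding hom_def
      proof (intro allI impI)
        fix u assume "f (False # u) \<noteq> 0"
        then have "length (False # u) = Suc m \<and> count_list (False # u) True = j"
          using Suc.prems(1) unfolding hom_def by blast
        then show "length u = m \<and> count_list u True = j" by simp
      qed
      have "Eop m (\<lambda>u. f (False # u)) r \<noteq> 0 \<or> f (True # r) \<noteq> 0"
        using Suc.prems(2) Cons False by auto
      then show ?thesis
      proof
        assume "Eop m (\<lambda>u. f (False # u)) r \<noteq> 0"
        from Suc.IH[OF h this] show ?thesis using Cons False by auto
      next
        assume "f (True # r) \<noteq> 0"
        then have "length (True # r) = Suc m \<and> count_list (True # r) True = j"
          using Suc.prems(1) unfolding hom_def by blast
        then show ?thesis using Cons False by simp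
      qed
    qed
  qed
qed

lemma hom_Eop: "hom m (Suc j) f \<Longrightarrow> hom m j (Eop m f)"
proof -
  assume h: "hom m (Suc j) f"
  show ?thesis unfolding hom_def
  proof (intro allI impI)
    fix w assume "Eop m f w \<noteq> 0"
    from Eop_supp[OF h this] show "length w = m \<and> count_list w True = j" by simp
  qed
qed

lemma tens_Cons: "(\<lambda>u. tens (Suc a) f g (x # u)) = tens a (\<lambda>u. f (x # u)) g"
  by (auto simp: tens_def fun_eq_iff)

lemma tens_Cons': "tens (Suc a) f g (x # u) = tens a (\<lambda>u. f (x # u)) g u"
  by (auto simp: tens_def fun_eq_iff)

lemma tens_lin1: "tens a (\<lambda>u. c * f u + d * f' u) g = (\<lambda>w. c * tens a f g w + d * tens a f' g w)"
  by (auto simp: tens_def fun_eq_iff algebra_simps)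

lemma tens_neg1: "tens a (\<lambda>u. - f u) g = (\<lambda>w. - tens a f g w)"
  by (auto simp: tens_def fun_eq_iff algebra_simps)

lemma tens_scale2: "tens a f (\<lambda>u. c * g u) = (\<lambda>w. c * tens a f g w)"
  by (auto simp: tens_def fun_eq_iff algebra_simps)

lemma tens_zero1: "tens a (\<lambda>u. 0) g = (\<lambda>w. 0)"
  by (auto simp: tens_def fun_eq_iff)

lemma Eop_Suc_T: "Eop (Suc m) f (True # r) = - Eop m (\<lambda>u. f (True # u)) r"
  by simp
lemma Eop_Suc_F: "Eop (Suc m) f (False # r) = Eop m (\<lambda>u. f (False # u)) r + qq powi (- int m) * f (True # r)"
  by simp
lemma Eop_Suc_Nil: "Eop (Suc m) f [] = 0"
  by simp

lemma leibniz:
  assumes "Eop c Y = (\<lambda>w. 0)"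
  shows "Eop (a + c) (tens a X Y) = tens a (Eop a X) (\<lambda>w. qq powi (- int c) * Y w)"
proof (induction a arbitrary: X)
  case 0
  have "tens 0 X Y = (\<lambda>w. X [] * Y w)" by (simp add: tens_def fun_eq_iff)
  then show ?case using assms by (simp add: Eop_scale tens_def fun_eq_iff)
next
  case (Suc a)
  show ?case
  proof
    fix w show "Eop (Suc a + c) (tens (Suc a) X Y) w =
        tens (Suc a) (Eop (Suc a) X) (\<lambda>w. qq powi - int c * Y w) w"
    proof (cases w)
      case Nil then show ?thesis by (simp add: tens_def)
    next
      case (Cons x r)
      have p: "qq powi (- int a - int c) = qq powi (- int a) * qq powi (- int c)"
        using qq_nz power_int_add[of qq "- int a" "- int c"] by simp
      have s: "Suc a + c = Suc (a + c)" by simp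
      show ?thesis
      proof (cases x)
        case True
        have xT: "w = True # r" using Cons True by simp
        have "Eop (Suc a + c) (tens (Suc a) X Y) w = - Eop (a + c) (tens a (\<lambda>u. X (True # u)) Y) r"
          unfolding s xT Eop_Suc_T tens_Cons ..
        also have "\<dots> = - tens a (Eop a (\<lambda>u. X (True # u))) (\<lambda>w. qq powi - int c * Y w) r"
          unfolding Suc ..
        also have "\<dots> = tens (Suc a) (Eop (Suc a) X) (\<lambda>w. qq powi - int c * Y w) w"
          unfolding xT tens_Cons' Eop_Suc_T tens_neg1 ..
        finally show ?thesis .
      next
        case False
        have xT: "w = False # r" using Cons False by simp
        have "Eop (Suc a + c) (tens (Suc a) X Y) w =
           Eop (a + c) (tens a (\<lambda>u. X (False # u)) Y) r + qq powi (- int (a + c)) * tens a (\<lambda>u. X (True # u)) Y r"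
          unfolding s xT Eop_Suc_F tens_Cons tens_Cons' ..
        also have "\<dots> = tens a (Eop a (\<lambda>u. X (False # u))) (\<lambda>w. qq powi - int c * Y w) r
             + qq powi (- int (a + c)) * tens a (\<lambda>u. X (True # u)) Y r"
          unfolding Suc ..
        also have "\<dots> = tens (Suc a) (Eop (Suc a) X) (\<lambda>w. qq powi - int c * Y w) w"
          unfolding xT tens_Cons' Eop_Suc_F
          by (cases "a \<le> length r") (simp_all add: tens_def p algebra_simps)
        finally show ?thesis .
      qed
    qed
  qed
qed

lemma Qh_formula:
  "Qh h m f w = (if m \<le> length w then
     qq powi (fst h * int (count_list (take m w) False) + snd h * int (count_list (take m w) True)) * f w else 0)"
proof (induction m arbitrary: f w)
  case 0 then show ?case by simp
next
  case (Suc m)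
  show ?case
  proof (cases w)
    case Nil then show ?thesis by simp
  next
    case (Cons x r)
    have nz: "qq \<noteq> 0" by (rule qq_nz)
    have pa: "qq powi (x1 + x2) = qq powi x1 * qq powi x2" for x1 x2
      using nz by (simp add: power_int_add)
    show ?thesis using Suc[of "\<lambda>u. f (x # u)" r]
      by (cases x) (simp_all add: Cons pa algebra_simps)
  qed
qed

lemma qq_pow_inj: "qq ^ a = qq ^ b \<Longrightarrow> a = b"
proof -
  assume e: "qq ^ a = qq ^ b"
  have pw: "qq ^ n = Fract ([:0,1:] ^ n) 1" for n
    by (induction n) (simp_all add: qq_def One_fract_def)
  have "([:0,1:] :: complex poly) ^ a = [:0,1:] ^ b"
    using e unfolding pw by (simp add: eq_fract)
  then have "degree (([:0,1:] :: complex poly) ^ a) = degree (([:0,1:] :: complex poly) ^ b)" by simp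
  then show ?thesis by (simp add: degree_power_eq)
qed

lemma hom_Vt: "hom n k v \<Longrightarrow> v \<in> Vt n"
  by (auto simp: hom_def Vt_def)

lemma hom_Qh: "hom n k v \<Longrightarrow> Qh (c1, c2) n v = scaleV (qq powi (c1 * int (n - k) + c2 * int k)) v"
  unfolding scaleV_def
proof
  fix w assume h: "hom n k v"
  show "Qh (c1, c2) n v w = qq powi (c1 * int (n - k) + c2 * int k) * v w"
  proof (cases "v w = 0")
    case True then show ?thesis by (simp add: Qh_formula)
  next
    case False
    with h have "length w = n" "count_list w True = k" by (auto simp: hom_def)
    moreover have "count_list w False + count_list w True = length w"
      by (induction w) auto
    ultimately have e: "int (count_list w False) = int n - int k" "k \<le> n" by auto
    then show ?thesis using \<open>length w = n\<close> \<open>count_list w True = k\<close> by (simp add: Qh_formula e)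
  qed
qed

lemma Hk_iff: "Hk n k = {v. hom n k v \<and> Eop n v = (\<lambda>w. 0)}"
proof (intro set_eqI iffI)
  fix v assume "v \<in> {v. hom n k v \<and> Eop n v = (\<lambda>w. 0)}"
  then show "v \<in> Hk n k" by (auto simp: Hk_def hom_Vt hom_Qh)
next
  fix v assume v: "v \<in> Hk n k"
  have "hom n k v" unfolding hom_def
  proof (intro allI impI)
    fix w assume nz: "v w \<noteq> 0"
    then have l: "length w = n" using v by (auto simp: Hk_def Vt_def)
    have "Qh (0, 1) n v w = scaleV (qq powi (0 * int (n - k) + 1 * int k)) v w"
      using v unfolding Hk_def by auto
    then have "qq ^ count_list w True * v w = qq ^ k * v w"
      using l by (simp add: Qh_formula scaleV_def)
    then have "count_list w True = k" using nz qq_pow_inj by simp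
    with l show "length w = n \<and> count_list w True = k" by simp
  qed
  then show "v \<in> {v. hom n k v \<and> Eop n v = (\<lambda>w. 0)}" using v by (auto simp: Hk_def)
qed

lemma Eop_v0: "Eop a (bvec (replicate a False)) = (\<lambda>w. 0)"
proof (induction a)
  case 0 then show ?case by simp
next
  case (Suc a)
  have e1: "(\<lambda>u. bvec (replicate (Suc a) False) (True # u)) = (\<lambda>u. 0)" by (simp add: bvec_def)
  have e2: "(\<lambda>u. bvec (replicate (Suc a) False) (False # u)) = bvec (replicate a False)"
    by (simp add: bvec_def fun_eq_iff)
  show ?case
  proof
    fix w show "Eop (Suc a) (bvec (replicate (Suc a) False)) w = 0"
    proof (cases w)
      case Nil then show ?thesis by simp
    next
      case (Cons x r)
      show ?thesis
        by (cases x) (simp_all only: Cons Eop_Suc_T Eop_Suc_F e1 e2 Suc Eop_zero,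
          simp_all add: bvec_def)
    qed
  qed
qed

fun wfs :: "nat list \<Rightarrow> bool" where
  "wfs [] = False" | "wfs [a] = True" | "wfs (a # b # rest) = (2 \<le> b \<and> wfs rest)"

fun wts :: "nat list \<Rightarrow> nat" where
  "wts [] = 0" | "wts [a] = 0" | "wts (a # b # rest) = (b - 1) + wts rest"

fun lead :: "nat list \<Rightarrow> bool list" where
  "lead [] = []" | "lead [a] = replicate a False"
| "lead (a # b # rest) = replicate (Suc a) False @ replicate (b - 1) True @ lead rest"

lemma all_nat_split2: "(\<forall>i. P i) \<longleftrightarrow> P 0 \<and> P 1 \<and> (\<forall>j. P (Suc (Suc j)))"
  by (metis One_nat_def not0_implies_Suc)

lemma oddset2: "{i. i < Suc (Suc L) \<and> odd i} = insert 1 ((\<lambda>j. Suc (Suc j)) ` {j. j < L \<and> odd j})"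
proof (intro set_eqI iffI)
  fix i assume "i \<in> {i. i < Suc (Suc L) \<and> odd i}"
  then show "i \<in> insert 1 ((\<lambda>j. Suc (Suc j)) ` {j. j < L \<and> odd j})"
    by (cases i rule: nat.exhaust; case_tac "i - 1" rule: nat.exhaust) auto
qed auto

lemma strings_char: "odd (length s) \<and> (\<forall>i < length s. odd i \<longrightarrow> 2 \<le> s ! i) \<longleftrightarrow> wfs s"
  "odd (length s) \<Longrightarrow> (\<Sum>i \<in> {i. i < length s \<and> odd i}. s ! i - 1) = wts s"
proof (induction s rule: wfs.induct)
  case (3 a b rest)
  {
    case 1
    have "(\<forall>i < length (a # b # rest). odd i \<longrightarrow> 2 \<le> (a # b # rest) ! i) \<longleftrightarrow>
       2 \<le> b \<and> (\<forall>i < length rest. odd i \<longrightarrow> 2 \<le> rest ! i)"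
      by (subst all_nat_split2) simp
    then show ?case using 3(1) by auto
  next
    case 2
    have "(\<Sum>i \<in> {i. i < length (a # b # rest) \<and> odd i}. (a # b # rest) ! i - 1)
      = (b - 1) + (\<Sum>i \<in> {i. i < length rest \<and> odd i}. rest ! i - 1)"
    proof -
      have fin: "finite ((\<lambda>j. Suc (Suc j)) ` {j. j < length rest \<and> odd j})" by simp
      have n1: "1 \<notin> (\<lambda>j. Suc (Suc j)) ` {j. j < length rest \<and> odd j}" by auto
      have inj: "inj_on (\<lambda>j. Suc (Suc j)) {j. j < length rest \<and> odd j}" by (simp add: inj_on_def)
      show ?thesis unfolding length_Cons oddset2 sum.insert[OF fin n1] sum.reindex[OF inj]
        by simp
    qed
    then show ?case using 3(2) 2 by simp
  }
qed auto

lemma Strings_iff: "s \<in> Strings n k \<longleftrightarrow> wfs s \<and> wts s = k \<and> sum_list s = n"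
  using strings_char[of s] unfolding Strings_def by auto

lemma count_rep[simp]: "count_list (replicate n x) y = (if x = y then n else 0)"
  by (induction n) auto

lemma hom_eq: "hom m j f \<Longrightarrow> m = m' \<Longrightarrow> j = j' \<Longrightarrow> hom m' j' f" by simp

lemma hom_E1: "hom b (b - 1) (Eop b (bvec (replicate b True)))"
proof (cases b)
  case 0 then show ?thesis by (simp add: hom_def)
next
  case (Suc b')
  have "hom b (Suc b') (bvec (replicate b True))"
    using hom_bvec[of "replicate b True"] Suc by simp
  then have "hom b b' (Eop b (bvec (replicate b True)))"
    using Suc hom_Eop[of b b' "bvec (replicate b True)"] by blast
  moreover have "b - 1 = b'" using Suc by simp
  ultimately show ?thesis by simp
qed

lemma hom_phi: "wfs s \<Longrightarrow> hom (sum_list s) (wts s) (phi s)"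
proof (induction s rule: phi.induct)
  case 1 then show ?case by simp
next
  case (2 a) then show ?case using hom_bvec[of "replicate a False"] by simp
next
  case (3 a b rest)
  have h0: "hom a 0 (bvec (replicate a False))" using hom_bvec[of "replicate a False"] by simp
  have "hom (a + b) (0 + (b - 1)) (tens a (bvec (replicate a False)) (Eop b (bvec (replicate b True))))"
    by (rule hom_tens[OF h0 hom_E1])
  from hom_tens[OF this 3(1)] 3(2) show ?case by (simp add: add.assoc)
qed

lemma Eop_phi: "wfs s \<Longrightarrow> Eop (sum_list s) (phi s) = (\<lambda>w. 0)"
proof (induction s rule: phi.induct)
  case 1 then show ?case by simp
next
  case (2 a) then show ?case using Eop_v0 by simp
next
  case (3 a b rest)
  have ih: "Eop (sum_list rest) (phi rest) = (\<lambda>w. 0)" using 3 by simp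
  have inner: "Eop (a + b) (tens a (bvec (replicate a False)) (Eop b (bvec (replicate b True)))) = (\<lambda>w. 0)"
    using leibniz[OF Eop_Eop, where a=a and X="bvec (replicate a False)"] by (simp add: Eop_v0 tens_zero1)
  have "Eop ((a + b) + sum_list rest) (phi (a # b # rest)) = (\<lambda>w. 0)"
    using leibniz[OF ih, where a="a + b"] by (simp add: inner tens_zero1)
  then show ?case by (simp add: add.assoc)
qed

lemma phi_Hk: "s \<in> Strings n k \<Longrightarrow> phi s \<in> Hk n k"
  unfolding Hk_iff Strings_iff using hom_phi Eop_phi by auto

lemma lead_len: "wfs s \<Longrightarrow> length (lead s) = sum_list s \<and> count_list (lead s) True = wts s"
  by (induction s rule: lead.induct) auto

lemma lead_alt: "lead (a # b # rest) = replicate a False @ (False # replicate (b - 1) True) @ lead rest"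
  by (simp add: replicate_app_Cons_same)

lemma tens_app: "length u = a \<Longrightarrow> tens a f g (u @ v) = f u * g v"
  by (simp add: tens_def)

lemma bvec_self: "bvec u u = 1" by (simp add: bvec_def)

lemma E1_lead: "1 \<le> b \<Longrightarrow> Eop b (bvec (replicate b True)) (False # replicate (b - 1) True) \<noteq> 0"
proof (cases b)
  case (Suc b')
  have z: "(\<lambda>u. bvec (replicate b True) (False # u)) = (\<lambda>u. 0)" using Suc by (simp add: bvec_def)
  show ?thesis using Suc qq_nz unfolding Suc Eop_Suc_F
    by (simp only: z[unfolded Suc] Eop_zero) (simp add: bvec_def)
qed simp

lemma phi_lead: "wfs s \<Longrightarrow> phi s (lead s) \<noteq> 0"
proof (induction s rule: phi.induct)
  case 1 then show ?case by simp
next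
  case (2 a) then show ?case by (simp add: bvec_def)
next
  case (3 a b rest)
  have b: "2 \<le> b" "wfs rest" using 3 by auto
  have l1: "length (replicate a False @ (False # replicate (b - 1) True)) = a + b" using b by simp
  have "phi (a # b # rest) (lead (a # b # rest)) =
     tens a (bvec (replicate a False)) (Eop b (bvec (replicate b True))) (replicate a False @ (False # replicate (b - 1) True))
     * phi rest (lead rest)"
    unfolding lead_alt phi.simps append_assoc[symmetric] tens_app[OF l1] ..
  also have "\<dots> = Eop b (bvec (replicate b True)) (False # replicate (b - 1) True) * phi rest (lead rest)"
    by (simp add: tens_app bvec_self)
  finally show ?case using E1_lead[of b] b 3(1) by simp
qed

lemma count_le_len: "count_list xs y \<le> length xs"
  by (induction xs) auto

lemma count_eq_len: "count_list xs True = length xs \<Longrightarrow> xs = replicate (length xs) True"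
proof (induction xs)
  case (Cons x xs)
  then show ?case using count_le_len[of xs True] by (cases x) auto
qed simp

lemma lead_block: "length u = b \<Longrightarrow> count_list u True = b - 1 \<Longrightarrow> 1 \<le> b \<Longrightarrow>
   False # replicate (b - 1) True \<le> u"
proof (cases u)
  case (Cons x u')
  assume a: "length u = b" "count_list u True = b - 1" "1 \<le> b"
  show ?thesis
  proof (cases x)
    case True then show ?thesis using Cons by simp
  next
    case False
    then have "count_list u' True = length u'" using a Cons by simp
    then have eq: "u' = replicate (length u') True" by (rule count_eq_len)
    have bb: "b - 1 = length u'" using a(1) Cons by simp
    have "u = False # replicate (b - 1) True" unfolding bb using Cons False eq by simp
    then show ?thesis by simp
  qed
qed simp

lemma app_mono: "length x = length y \<Longrightarrow> x \<le> y \<Longrightarrow> x' \<le> y' \<Longrightarrow> x @ x' \<le> y @ y'"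
proof (induction x arbitrary: y)
  case Nil then show ?case by simp
next
  case (Cons a x)
  then obtain b y0 where y: "y = b # y0" by (cases y) auto
  show ?case using Cons y by (auto simp: less_le_not_le)
qed

lemma phi_supp: "wfs s \<Longrightarrow> phi s w \<noteq> 0 \<Longrightarrow> lead s \<le> w"
proof (induction s arbitrary: w rule: phi.induct)
  case 1 then show ?case by simp
next
  case (2 a) then show ?case by (simp add: bvec_def split: if_splits)
next
  case (3 a b rest)
  have b: "2 \<le> b" "wfs rest" using 3 by auto
  define u where "u = take (a + b) w"
  have ab: "a + b \<le> length w" and
    pu: "tens a (bvec (replicate a False)) (Eop b (bvec (replicate b True))) u \<noteq> 0" and
    pr: "phi rest (drop (a + b) w) \<noteq> 0"
    using 3(3) by (auto simp: tens_def u_def split: if_splits)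
  have lu: "length u = a + b" using ab by (simp add: u_def)
  have t1: "bvec (replicate a False) (take a u) \<noteq> 0" and
       t2: "Eop b (bvec (replicate b True)) (drop a u) \<noteq> 0"
    using pu lu by (auto simp: tens_def split: if_splits)
  have tu: "take a u = replicate a False" using t1 by (simp add: bvec_def split: if_splits)
  have "length (drop a u) = b \<and> count_list (drop a u) True = b - 1"
    using hom_E1[of b] t2 unfolding hom_def by blast
  then have blk: "False # replicate (b - 1) True \<le> drop a u" using b by (intro lead_block) auto
  have ih: "lead rest \<le> drop (a + b) w" using 3(1) b pr by simp
  have w: "w = take a u @ drop a u @ drop (a + b) w"
  proof -
    have "w = u @ drop (a + b) w" by (simp add: u_def)
    then show ?thesis by (metis append_take_drop_id append.assoc)
  qed
  have "replicate a False @ (False # replicate (b - 1) True) @ lead rest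
     \<le> take a u @ drop a u @ drop (a + b) w"
    apply (rule app_mono)
    using tu apply simp
    using tu apply simp
    apply (rule app_mono)
    using b lu apply simp
    using blk ih by auto
  then show ?case using w lead_alt by metis
qed

lemma lead_hd: "wfs s \<Longrightarrow> lead s = [] \<or> (\<exists>r. lead s = False # r)"
proof (cases s rule: lead.cases)
  case (2 a) then show ?thesis by (cases a) simp_all
qed simp_all

lemma rep_FT: "replicate n False @ True # X = replicate n' False @ True # X' \<Longrightarrow> n = n' \<and> X = X'"
proof (induction n arbitrary: n')
  case 0 then show ?case by (cases n') auto
next
  case (Suc n) then show ?case by (cases n') auto
qed

lemma rep_T: "replicate m True @ Y = replicate m' True @ Y' \<Longrightarrow> (Y = [] \<or> (\<exists>r. Y = False # r)) \<Longrightarrow>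
   (Y' = [] \<or> (\<exists>r. Y' = False # r)) \<Longrightarrow> m = m' \<and> Y = Y'"
proof (induction m arbitrary: m')
  case 0 then show ?case by (cases m') auto
next
  case (Suc m) then show ?case by (cases m') auto
qed

lemma lead_long: "2 \<le> b \<Longrightarrow> lead (a # b # rest) = replicate (Suc a) False @ True # (replicate (b - 2) True @ lead rest)"
proof -
  assume "2 \<le> b"
  then have "b - 1 = Suc (b - 2)" by simp
  then have "replicate (b - 1) True = True # replicate (b - 2) True" by simp
  then show ?thesis by simp
qed

lemma lead_inj: "wfs s \<Longrightarrow> wfs s' \<Longrightarrow> lead s = lead s' \<Longrightarrow> s = s'"
proof (induction s arbitrary: s' rule: lead.induct)
  case 1 then show ?case by simp
next
  case (2 a)
  show ?case
  proof (cases s' rule: lead.cases)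
    case 1 then show ?thesis using 2 by simp
  next
    case (2 a') then show ?thesis using "2.prems" by simp
  next
    case (3 a' b' rest')
    then have "True \<in> set (lead s')" using "2.prems" by (simp add: lead_long)
    then have "True \<in> set (lead [a])" by (simp only: "2.prems"(3))
    then show ?thesis by simp
  qed
next
  case (3 a b rest)
  have b: "2 \<le> b" "wfs rest" using "3.prems" by auto
  show ?case
  proof (cases s' rule: lead.cases)
    case 1 then show ?thesis using "3.prems" by simp
  next
    case (2 a')
    have "True \<in> set (lead (a # b # rest))" using b by (simp add: lead_long)
    then have "True \<in> set (lead s')" unfolding "3.prems"(3) .
    then show ?thesis using 2 by simp
  next
    case (3 a' b' rest')
    have b': "2 \<le> b'" "wfs rest'" using "3.prems" 3 by auto
    have "replicate (Suc a) False @ True # (replicate (b - 2) True @ lead rest)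
        = replicate (Suc a') False @ True # (replicate (b' - 2) True @ lead rest')"
      using "3.prems" 3 b b' by (simp only: lead_long)
    then have e1: "a = a'" and e2: "replicate (b - 2) True @ lead rest = replicate (b' - 2) True @ lead rest'"
      using rep_FT by blast+
    from rep_T[OF e2 lead_hd[OF b(2)] lead_hd[OF b'(2)]]
    have "b - 2 = b' - 2" "lead rest = lead rest'" by auto
    then have "b = b'" using b b' by simp
    moreover have "rest = rest'" using "3.IH"[OF b(2) b'(2)] \<open>lead rest = lead rest'\<close> by simp
    ultimately show ?thesis using e1 3 by simp
  qed
qed

lemma takeWhile_rep: "takeWhile id u = replicate (length (takeWhile id u)) True"
  by (rule replicate_length_same[symmetric]) (auto dest: set_takeWhileD)

lemma lead_surj: "w = [] \<or> (\<exists>r. w = False # r) \<Longrightarrow> \<exists>s. wfs s \<and> lead s = w"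
proof (induction w rule: length_induct)
  case (1 w)
  show ?case
  proof (cases w)
    case Nil
    then show ?thesis by (intro exI[of _ "[0]"]) simp
  next
    case (Cons x u)
    then have x: "x = False" using "1.prems" by auto
    show ?thesis
    proof (cases "u = [] \<or> (\<exists>r. u = False # r)")
      case True
      then obtain s' where s': "wfs s'" "lead s' = u" using "1.IH" Cons by auto
      show ?thesis
      proof (cases s' rule: lead.cases)
        case 1 then show ?thesis using s' by simp
      next
        case (2 a') then show ?thesis using s' Cons x by (intro exI[of _ "[Suc a']"]) auto
      next
        case (3 a' b' r) then show ?thesis using s' Cons x by (intro exI[of _ "Suc a' # b' # r"]) auto
      qed
    next
      case False
      then obtain u' where u: "u = True # u'" by (cases u) auto
      define j where "j = length (takeWhile id u)"
      define y where "y = dropWhile id u"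
      have uj: "u = replicate j True @ y" unfolding j_def y_def takeWhile_rep[symmetric]
        by (rule takeWhile_dropWhile_id[symmetric])
      have j1: "1 \<le> j" unfolding j_def u by simp
      have yh: "y = [] \<or> (\<exists>r. y = False # r)"
      proof (cases y)
        case (Cons z r)
        then have "\<not> id (hd y)" unfolding y_def using hd_dropWhile[of id u] by simp
        then have "\<not> id z" using Cons by simp
        then show ?thesis using Cons by simp
      qed simp
      have "length y < length w" using uj Cons j1 by simp
      then obtain sy where sy: "wfs sy" "lead sy = y" using "1.IH" yh by blast
      show ?thesis
      proof (intro exI[of _ "0 # Suc j # sy"] conjI)
        show "wfs (0 # Suc j # sy)" using j1 sy by simp
        show "lead (0 # Suc j # sy) = w" using sy uj Cons x by simp
      qed
    qed
  qed
qed

lemma Hk_subspace: "tv.subspace (Hk n k)"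
  unfolding tv.subspace_def Hk_iff
proof (intro conjI ballI allI)
  show "0 \<in> {v. hom n k v \<and> Eop n v = (\<lambda>w. 0)}"
    by (simp add: hom_def zero_fun_def Eop_zero)
next
  fix x y assume x: "x \<in> {v. hom n k v \<and> Eop n v = (\<lambda>w. 0)}" and y: "y \<in> {v. hom n k v \<and> Eop n v = (\<lambda>w. 0)}"
  have e: "x + y = (\<lambda>w. x w + y w)" by (simp add: plus_fun_def)
  show "x + y \<in> {v. hom n k v \<and> Eop n v = (\<lambda>w. 0)}"
    unfolding e
  proof (intro CollectI conjI)
    show "hom n k (\<lambda>w. x w + y w)" unfolding hom_def
    proof (intro allI impI)
      fix w assume "x w + y w \<noteq> 0"
      then have "x w \<noteq> 0 \<or> y w \<noteq> 0" by auto
      then show "length w = n \<and> count_list w True = k" using x y by (auto simp: hom_def)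
    qed
    show "Eop n (\<lambda>w. x w + y w) = (\<lambda>w. 0)" using x y by (simp add: Eop_add)
  qed
next
  fix c x assume x: "x \<in> {v. hom n k v \<and> Eop n v = (\<lambda>w. 0)}"
  show "scaleV c x \<in> {v. hom n k v \<and> Eop n v = (\<lambda>w. 0)}"
    using x unfolding scaleV_def by (auto simp: hom_def Eop_scale)
qed

lemma span_phi_sub: "tv.span (phi ` Strings n k) \<subseteq> Hk n k"
  by (rule tv.span_minimal) (auto intro: phi_Hk Hk_subspace)

lemma indep_phi: "tv.independent (phi ` Strings n k)"
proof
  assume "tv.dependent (phi ` Strings n k)"
  then obtain t u where t: "finite t" "t \<subseteq> phi ` Strings n k"
    and sum0: "(\<Sum>v\<in>t. scaleV (u v) v) = 0" and ex: "\<exists>v\<in>t. u v \<noteq> 0"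
    unfolding tv.dependent_explicit by blast
  define sv where "sv v = (SOME s. s \<in> Strings n k \<and> phi s = v)" for v
  have sv: "sv v \<in> Strings n k \<and> phi (sv v) = v" if "v \<in> t" for v
    unfolding sv_def by (rule someI_ex) (use that t in auto)
  define t' where "t' = {v\<in>t. u v \<noteq> 0}"
  have fin': "finite ((lead \<circ> sv) ` t')" using t by (simp add: t'_def)
  have ne': "(lead \<circ> sv) ` t' \<noteq> {}" using ex by (auto simp: t'_def)
  define m where "m = Min ((lead \<circ> sv) ` t')"
  obtain v1 where v1: "v1 \<in> t'" "lead (sv v1) = m"
    using Min_in[OF fin' ne'] unfolding m_def by auto
  have v1t: "v1 \<in> t" "u v1 \<noteq> 0" using v1 by (auto simp: t'_def)
  have wf1: "wfs (sv v1)" using sv[OF v1t(1)] by (simp add: Strings_iff)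
  have "0 = (\<Sum>v\<in>t. scaleV (u v) v) m" using sum0 by simp
  also have "\<dots> = (\<Sum>v\<in>t. u v * v m)" by (simp add: sum_fun_apply scaleV_def)
  also have "\<dots> = u v1 * v1 m + (\<Sum>v\<in>t - {v1}. u v * v m)"
    using t(1) v1t(1) by (simp add: sum.remove)
  also have "(\<Sum>v\<in>t - {v1}. u v * v m) = 0"
  proof (rule sum.neutral, rule ballI)
    fix v assume v: "v \<in> t - {v1}"
    show "u v * v m = 0"
    proof (rule ccontr)
      assume nz: "u v * v m \<noteq> 0"
      then have vt': "v \<in> t'" using v by (auto simp: t'_def)
      have wf: "wfs (sv v)" using sv v by (auto simp: Strings_iff)
      have "m \<le> lead (sv v)" unfolding m_def using fin' vt' by (auto intro: Min_le)
      moreover have "phi (sv v) m \<noteq> 0" using nz sv v by auto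
      then have "lead (sv v) \<le> m" using phi_supp[OF wf] by blast
      ultimately have "lead (sv v) = lead (sv v1)" using v1 by simp
      then have "sv v = sv v1" using lead_inj wf wf1 by blast
      have "v = phi (sv v)" using sv v by auto
      also have "\<dots> = phi (sv v1)" using \<open>sv v = sv v1\<close> by simp
      also have "\<dots> = v1" using sv v1t by auto
      finally have "v = v1" .
      then show False using v by simp
    qed
  qed
  finally have "u v1 * v1 m = 0" by simp
  moreover have "v1 m \<noteq> 0" using phi_lead[OF wf1] sv[OF v1t(1)] v1 by simp
  ultimately show False using v1t by simp
qed

lemma tri:
  fixes F :: "bool list set" and g :: "bool list \<Rightarrow> vec"
  assumes fin: "finite F" and gX: "\<forall>w\<in>F. g w \<in> tv.span X" and diag: "\<forall>w\<in>F. g w w \<noteq> 0"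
    and up: "\<forall>w\<in>F. \<forall>w'\<in>F. g w w' \<noteq> 0 \<longrightarrow> w \<le> w'"
  shows "w \<in> F \<Longrightarrow> \<exists>x\<in>tv.span X. \<forall>w'\<in>F. x w' = (if w' = w then 1 else 0)"
proof (induction "card {w'\<in>F. w < w'}" arbitrary: w rule: less_induct)
  case less
  define G where "G = {w'\<in>F. w < w'}"
  have "\<forall>w'\<in>G. \<exists>x. x \<in> tv.span X \<and> (\<forall>w''\<in>F. x w'' = (if w'' = w' then 1 else 0))"
  proof
    fix w' assume w': "w' \<in> G"
    have "{w''\<in>F. w' < w''} \<subset> G" using w' unfolding G_def by auto
    then have "card {w''\<in>F. w' < w''} < card G" using fin by (intro psubset_card_mono) (auto simp: G_def)
    moreover have "w' \<in> F" using w' unfolding G_def by simp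
    ultimately obtain x where "x \<in> tv.span X" "\<forall>w''\<in>F. x w'' = (if w'' = w' then 1 else 0)"
      using less.hyps[of w'] unfolding G_def by blast
    then show "\<exists>x. x \<in> tv.span X \<and> (\<forall>w''\<in>F. x w'' = (if w'' = w' then 1 else 0))"
      by blast
  qed
  from bchoice[OF this] obtain xf where xf: "\<forall>w'\<in>G. xf w' \<in> tv.span X \<and> (\<forall>w''\<in>F. xf w' w'' = (if w'' = w' then 1 else 0))"
    by blast
  have finG: "finite G" using fin by (simp add: G_def)
  define x where "x = scaleV (inverse (g w w)) (g w - (\<Sum>w'\<in>G. scaleV (g w w') (xf w')))"
  have "x \<in> tv.span X" unfolding x_def
    using gX less.prems xf by (intro tv.span_scale tv.span_diff tv.span_sum) auto
  moreover have "\<forall>w''\<in>F. x w'' = (if w'' = w then 1 else 0)"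
  proof
    fix w'' assume w'': "w'' \<in> F"
    have "(\<Sum>w'\<in>G. scaleV (g w w') (xf w')) w'' = (\<Sum>w'\<in>G. (if w'' = w' then g w w' else 0))"
      unfolding sum_fun_apply scaleV_def using xf w'' by (intro sum.cong) auto
    also have "\<dots> = (if w'' \<in> G then g w w'' else 0)"
      using finG by (simp add: sum.delta)
    finally have s: "(\<Sum>w'\<in>G. scaleV (g w w') (xf w')) w'' = (if w'' \<in> G then g w w'' else 0)" .
    have "x w'' = inverse (g w w) * (g w w'' - (\<Sum>w'\<in>G. scaleV (g w w') (xf w')) w'')"
      unfolding x_def scaleV_def[of "inverse (g w w)"] by simp
    then have xw: "x w'' = inverse (g w w) * (g w w'' - (if w'' \<in> G then g w w'' else 0))"
      unfolding s .
    show "x w'' = (if w'' = w then 1 else 0)"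
    proof (cases "w'' = w")
      case True
      then have "w'' \<notin> G" by (simp add: G_def)
      then show ?thesis using xw True diag less.prems by simp
    next
      case False
      show ?thesis
      proof (cases "w'' \<in> G")
        case True then show ?thesis using xw False by simp
      next
        case nG: False
        then have "\<not> w \<le> w''" using False w'' by (auto simp: G_def)
        then have "g w w'' = 0" using up less.prems w'' by blast
        then show ?thesis using xw False nG by simp
      qed
    qed
  qed
  ultimately show ?case by blast
qed

definition Fw :: "nat \<Rightarrow> nat \<Rightarrow> bool list set" where
  "Fw n k = {w. length w = n \<and> count_list w True = k \<and> (\<exists>r. w = False # r)}"

lemma Fw_finite: "finite (Fw n k)"
proof -
  have "Fw n k \<subseteq> {xs. set xs \<subseteq> UNIV \<and> length xs = n}" by (auto simp: Fw_def)
  moreover have "finite {xs :: bool list. set xs \<subseteq> UNIV \<and> length xs = n}"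
    by (rule finite_lists_length_eq) simp
  ultimately show ?thesis by (rule finite_subset)
qed

lemma vanish:
  assumes z: "z \<in> Hk n k" and n: "1 \<le> n" and F0: "\<forall>w\<in>Fw n k. z w = 0"
  shows "z = (\<lambda>w. 0)"
proof -
  obtain m where m: "n = Suc m" using n by (cases n) auto
  have hz: "hom n k z" and ez: "Eop n z = (\<lambda>w. 0)" using z by (auto simp: Hk_iff)
  have zF: "z (False # u) = 0" for u
  proof (rule ccontr)
    assume nz: "z (False # u) \<noteq> 0"
    then have "False # u \<in> Fw n k" using hz by (auto simp: hom_def Fw_def)
    then show False using F0 nz by blast
  qed
  have zF': "(\<lambda>u. z (False # u)) = (\<lambda>u. 0)" using zF by simp
  have zT: "z (True # r) = 0" for r
  proof -
    have "Eop (Suc m) z (False # r) = 0" using ez m by simp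
    then have "Eop m (\<lambda>u. z (False # u)) r + qq powi (- int m) * z (True # r) = 0"
      by (simp only: Eop_Suc_F)
    then have "qq powi (- int m) * z (True # r) = 0" unfolding zF' Eop_zero by simp
    then show ?thesis using qq_nz by simp
  qed
  have "z [] = 0" using hz m by (auto simp: hom_def)
  then show ?thesis
  proof -
    show ?thesis
    proof
      fix w show "z w = 0"
        using zF zT \<open>z [] = 0\<close> by (cases w rule: list.exhaust; case_tac "hd w") auto
    qed
  qed
qed

lemma span_phi: assumes n: "1 \<le> n" shows "Hk n k \<subseteq> tv.span (phi ` Strings n k)"
proof
  fix v assume v: "v \<in> Hk n k"
  let ?X = "phi ` Strings n k"
  let ?F = "Fw n k"
  have "\<forall>w\<in>?F. \<exists>s. wfs s \<and> lead s = w"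
    using lead_surj unfolding Fw_def by blast
  from bchoice[OF this] obtain sw where sw: "\<forall>w\<in>?F. wfs (sw w) \<and> lead (sw w) = w" by blast
  have swS: "sw w \<in> Strings n k" if "w \<in> ?F" for w
    using sw that lead_len[of "sw w"] by (auto simp: Strings_iff Fw_def)
  define g where "g w = phi (sw w)" for w
  have "\<forall>w\<in>?F. \<exists>x. x \<in> tv.span ?X \<and> (\<forall>w'\<in>?F. x w' = (if w' = w then 1 else 0))"
  proof
    fix w assume w: "w \<in> ?F"
    have "\<exists>x\<in>tv.span ?X. \<forall>w'\<in>?F. x w' = (if w' = w then 1 else 0)"
    proof (rule tri[OF Fw_finite _ _ _ w, of g])
      show "\<forall>w\<in>?F. g w \<in> tv.span ?X" using swS by (auto simp: g_def intro: tv.span_base)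
      show "\<forall>w\<in>?F. g w w \<noteq> 0"
      proof
        fix w assume "w \<in> ?F"
        then have "wfs (sw w)" "lead (sw w) = w" using sw by auto
        then show "g w w \<noteq> 0" using phi_lead[of "sw w"] unfolding g_def by simp
      qed
      show "\<forall>w\<in>?F. \<forall>w'\<in>?F. g w w' \<noteq> 0 \<longrightarrow> w \<le> w'"
      proof (intro ballI impI)
        fix w w' assume "w \<in> ?F" "g w w' \<noteq> 0"
        then have "wfs (sw w)" "lead (sw w) = w" "phi (sw w) w' \<noteq> 0" using sw by (auto simp: g_def)
        then show "w \<le> w'" using phi_supp[of "sw w" w'] by simp
      qed
    qed
    then show "\<exists>x. x \<in> tv.span ?X \<and> (\<forall>w'\<in>?F. x w' = (if w' = w then 1 else 0))" by blast
  qed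
  from bchoice[OF this] obtain xw where
    xw: "\<forall>w\<in>?F. xw w \<in> tv.span ?X \<and> (\<forall>w'\<in>?F. xw w w' = (if w' = w then 1 else 0))" by blast
  define y where "y = (\<Sum>w\<in>?F. scaleV (v w) (xw w))"
  have yX: "y \<in> tv.span ?X" unfolding y_def using xw by (intro tv.span_sum tv.span_scale) auto
  have zH: "v - y \<in> Hk n k"
    using v yX span_phi_sub[of n k] Hk_subspace[of n k] tv.subspace_diff by blast
  have "\<forall>w\<in>?F. (v - y) w = 0"
  proof
    fix w' assume w': "w' \<in> ?F"
    have "y w' = (\<Sum>w\<in>?F. v w * xw w w')" by (simp add: y_def sum_fun_apply scaleV_def)
    also have "\<dots> = (\<Sum>w\<in>?F. if w' = w then v w else 0)"
      using xw w' by (intro sum.cong) auto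
    also have "\<dots> = v w'" using w' Fw_finite by (simp add: sum.delta)
    finally show "(v - y) w' = 0" by simp
  qed
  then have "v - y = (\<lambda>w. 0)" using vanish[OF zH n] by blast
  then have "v = y"
  proof -
    assume e: "v - y = (\<lambda>w. 0)"
    show "v = y"
    proof
      fix w have "(v - y) w = 0" using e by simp
      then show "v w = y w" by simp
    qed
  qed
  then show "v \<in> tv.span ?X" using yX by simp
qed

lemma E2: "Eop 2 (bvec (replicate 2 True)) = scaleV (inverse qq) (bvec [False, True]) - bvec [True, False]"
proof
  fix w
  show "Eop 2 (bvec (replicate 2 True)) w = (scaleV (inverse qq) (bvec [False, True]) - bvec [True, False]) w"
    unfolding numeral_2_eq_2
    by (cases w rule: list.exhaust; case_tac "tl w" rule: list.exhaust)
       (auto simp: bvec_def scaleV_def power_int_minus1_right)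
qed

lemma S1: "s \<in> Strings n 1 \<longleftrightarrow> (\<exists>a c. s = [a, 2, c] \<and> a + 2 + c = n)"
proof
  assume "s \<in> Strings n 1"
  then have s: "wfs s" "wts s = 1" "sum_list s = n" by (auto simp: Strings_iff)
  show "\<exists>a c. s = [a, 2, c] \<and> a + 2 + c = n"
  proof (cases s rule: lead.cases)
    case 1 then show ?thesis using s by simp
  next
    case (2 a) then show ?thesis using s by simp
  next
    case (3 a b rest)
    then have b: "2 \<le> b" "wfs rest" "b - 1 + wts rest = 1" using s by auto
    then have b2: "b = 2" "wts rest = 0" by auto
    show ?thesis
    proof (cases rest rule: lead.cases)
      case 1 then show ?thesis using b by simp
    next
      case (2 c) then show ?thesis using 3 b2 s by auto
    next
      case (3 a' b' r) then show ?thesis using b b2 by auto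
    qed
  qed
next
  assume "\<exists>a c. s = [a, 2, c] \<and> a + 2 + c = n"
  then show "s \<in> Strings n 1" by (auto simp: Strings_iff)
qed

lemma ei_phi: "1 \<le> i \<Longrightarrow> ei n i = phi [i - 1, 2, n - 1 - i]"
proof -
  assume i: "1 \<le> i"
  then have e: "i - 1 + 2 = i + 1" by simp
  show ?thesis unfolding ei_def phi.simps e E2 ..
qed

lemma ei_img: "2 \<le> n \<Longrightarrow> ei n ` {1..n-1} = phi ` Strings n 1"
proof
  assume n: "2 \<le> n"
  show "ei n ` {1..n-1} \<subseteq> phi ` Strings n 1"
  proof
    fix v assume "v \<in> ei n ` {1..n-1}"
    then obtain i where i: "1 \<le> i" "i \<le> n - 1" "v = ei n i" by auto
    then have "[i - 1, 2, n - 1 - i] \<in> Strings n 1" unfolding S1 by auto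
    moreover have "v = phi [i - 1, 2, n - 1 - i]" using i(1,3) ei_phi[of i n] by simp
    ultimately show "v \<in> phi ` Strings n 1" by (rule rev_image_eqI)
  qed
  show "phi ` Strings n 1 \<subseteq> ei n ` {1..n-1}"
  proof
    fix v assume "v \<in> phi ` Strings n 1"
    then obtain s where s: "s \<in> Strings n 1" "v = phi s" by blast
    then obtain a c where "s = [a, 2, c]" "a + 2 + c = n" unfolding S1 by blast
    then have ac: "v = phi [a, 2, c]" "a + 2 + c = n" using s by simp_all
    have cc: "n - 1 - (a + 1) = c" using ac by simp
    have "ei n (a + 1) = phi [a, 2, c]" using ei_phi[of "a + 1" n] unfolding cc by simp
    moreover have "a + 1 \<in> {1..n-1}" using ac by auto
    ultimately show "v \<in> ei n ` {1..n-1}" using ac by (metis image_eqI)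
  qed
qed

theorem proposition2p6:
  fixes n :: nat
  assumes "2 \<le> n"
  shows "(\<forall>k \<in> {1..n-1}. tv.independent (phi ` Strings n k)
            \<and> tv.span (phi ` Strings n k) = Hk n k)
       \<and> tv.independent (ei n ` {1..n-1}) \<and> tv.span (ei n ` {1..n-1}) = Hk n 1"
proof -
  have sp: "tv.span (phi ` Strings n k) = Hk n k" for k
    using span_phi_sub[of n k] span_phi[of n k] assms by auto
  show ?thesis using indep_phi sp ei_img[OF assms] by simp
qed

end
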